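(* Let $0<\gamma<1$, $p\ge2$ an integer, and $$\beta_{\gamma,p}:=\min\left\{\frac{1-\gamma}{2p}\log\Bigl(\frac{2p}{p+1}\Bigr),\ \frac{1-\gamma}{8\,p^\gamma(p-1)^{1-\gamma}}\right\}.$$ Then for every $j\ge p$, $$(c_\gamma^{(p)})_j\le (c_\gamma)_p\,(1-\beta_{\gamma,p})^{j-p},$$ and moreover $\frac{1-\gamma}{8p}\le\beta_{\gamma,p}\le\frac{1-\gamma}{4p}$.
   Context: $\log$ is the natural logarithm. $(c_\gamma)_j$ is defined by $(1-x)^{-\gamma}=\sum_{j\ge0}(c_\gamma)_jx^j$; $(\tilde c_\gamma)_k$ by $(1-x)^{\gamma}=\sum_{k\ge0}(\tilde c_\gamma)_kx^k$ ($|x|<1$). The sequence $(c_\gamma^{(p)})_j$ is defined by $(c_\gamma^{(p)})_0=1$ and $(c_\gamma^{(p)})_j=-\sum_{k=1}^{\min\{p-1,j\}}(\tilde c_\gamma)_k(c_\gamma^{(p)})_{j-k}$ for $j\ge1$; its first $n$ terms are the subdiagonal entries of the lower-triangular Toeplitz matrix $C_\gamma^{(p)}$, the inverse of the $n\times n$ lower-triangular Toeplitz matrix with $r$-th subdiagonal $(\tilde c_\gamma)_r$ for $r\le p-1$ and $0$ otherwise. *)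

theory Defs
  imports "HOL-Analysis.Analysis"
begin

text \<open>Coefficients of (1-x)^(-gamma): c_j = gamma(gamma+1)...(gamma+j-1)/j! = (-1)^j binom(-gamma, j).\<close>
definition c_coef :: "real \<Rightarrow> nat \<Rightarrow> real" where
  "c_coef \<gamma> j = (-1) ^ j * ((- \<gamma>) gchoose j)"

text \<open>Coefficients of (1-x)^gamma: (-1)^k binom(gamma, k).\<close>
definition ct_coef :: "real \<Rightarrow> nat \<Rightarrow> real" where
  "ct_coef \<gamma> k = (-1) ^ k * (\<gamma> gchoose k)"

fun cp_coef :: "real \<Rightarrow> nat \<Rightarrow> nat \<Rightarrow> real" where
  "cp_coef \<gamma> p j = (if j = 0 then 1 else
     - (\<Sum>k\<in>{1..min (p - 1) j}. ct_coef \<gamma> k * cp_coef \<gamma> p (j - k)))"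

declare cp_coef.simps[simp del]

definition beta_gp :: "real \<Rightarrow> nat \<Rightarrow> real" where
  "beta_gp \<gamma> p = min ((1 - \<gamma>) / (2 * real p) * ln (2 * real p / (real p + 1)))
                        ((1 - \<gamma>) / (8 * real p powr \<gamma> * (real p - 1) powr (1 - \<gamma>)))"

end

theory Submission
  imports Defs
begin

lemma gch_Suc: "(a::real) gchoose (Suc k) = (a gchoose k) * (a - real k) / real (Suc k)"
  unfolding gbinomial_prod_rev by (simp add: prod.atLeast0_lessThan_Suc field_simps)

lemma ct_Suc: "ct_coef g (Suc k) = ct_coef g k * (real k - g) / real (Suc k)"
  unfolding ct_coef_def by (simp add: gch_Suc field_simps)

lemma c_Suc: "c_coef g (Suc k) = c_coef g k * (g + real k) / real (Suc k)"
  unfolding c_coef_def by (simp add: gch_Suc field_simps)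

lemma ct_nonpos: assumes "0 < g" "g < 1" "k \<ge> 1" shows "ct_coef g k \<le> 0"
  using assms(3)
proof (induction k rule: dec_induct)
  case base then show ?case using assms by (simp add: ct_coef_def)
next
  case (step k)
  have "real k - g \<ge> 0" using step.hyps assms by simp
  then show ?case using step.IH by (simp add: ct_Suc divide_nonpos_nonneg mult_nonpos_nonneg)
qed

lemma c_pos: assumes "0 < g" shows "c_coef g k > 0"
proof (induction k)
  case 0 then show ?case by (simp add: c_coef_def)
next
  case (Suc k) then show ?case using assms by (simp add: c_Suc)
qed

lemma ct0 [simp]: "ct_coef g 0 = 1" by (simp add: ct_coef_def)
lemma c0 [simp]: "c_coef g 0 = 1" by (simp add: c_coef_def)

lemma conv: assumes "n \<ge> 1" shows "(\<Sum>k=0..n. ct_coef g k * c_coef g (n - k)) = 0"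
proof -
  have "(\<Sum>k=0..n. ct_coef g k * c_coef g (n - k)) = (-1)^n * (\<Sum>k=0..n. (g gchoose k) * ((-g) gchoose (n - k)))"
    unfolding sum_distrib_left
  proof (rule sum.cong)
    fix k assume "k \<in> {0..n}"
    then have "(-1::real)^k * (-1)^(n-k) = (-1)^n" by (simp add: power_add[symmetric])
    then show "ct_coef g k * c_coef g (n - k) = (-1)^n * ((g gchoose k) * ((-g) gchoose (n - k)))"
      unfolding ct_coef_def c_coef_def by (metis mult.assoc mult.left_commute)
  qed simp
  also have "\<dots> = 0" using assms by (simp add: gbinomial_Vandermonde gbinomial_0_left)
  finally show ?thesis .
qed

lemma sum_split0: fixes f :: "nat \<Rightarrow> real" shows "(\<Sum>k=0..n. f k) = f 0 + (\<Sum>k=1..n. f k)"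
  using sum.atLeast_Suc_atMost[of 0 n f] by simp

lemma cp_eq: assumes "j < p" shows "cp_coef g p j = c_coef g j"
  using assms
proof (induction j rule: less_induct)
  case (less j)
  show ?case
  proof (cases "j = 0")
    case True then show ?thesis by (simp add: cp_coef.simps)
  next
    case False
    have m: "min (p - 1) j = j" using less.prems by simp
    have "cp_coef g p j = - (\<Sum>k\<in>{1..min (p - 1) j}. ct_coef g k * cp_coef g p (j - k))"
      using False by (subst cp_coef.simps) simp
    also have "\<dots> = - (\<Sum>k=1..j. ct_coef g k * cp_coef g p (j - k))" unfolding m ..
    also have "\<dots> = - (\<Sum>k=1..j. ct_coef g k * c_coef g (j - k))"
      using less False by (intro arg_cong[where f=uminus] sum.cong) auto
    also have "\<dots> = c_coef g j"
      using conv[of j g] False sum_split0[of "\<lambda>k. ct_coef g k * c_coef g (j - k)" j] by simp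
    finally show ?thesis .
  qed
qed

lemma cp_p: assumes "p \<ge> 2" shows "cp_coef g p p = c_coef g p + ct_coef g p"
proof -
  have m: "min (p - 1) p = p - 1" by simp
  have "cp_coef g p p = - (\<Sum>k\<in>{1..min (p - 1) p}. ct_coef g k * cp_coef g p (p - k))"
    using assms by (subst cp_coef.simps) simp
  also have "\<dots> = - (\<Sum>k=1..p-1. ct_coef g k * cp_coef g p (p - k))" unfolding m ..
  also have "\<dots> = - (\<Sum>k=1..p-1. ct_coef g k * c_coef g (p - k))"
    using assms by (intro arg_cong[where f=uminus] sum.cong) (auto simp: cp_eq)
  also have "(\<Sum>k=1..p. ct_coef g k * c_coef g (p - k)) = (\<Sum>k=1..p-1. ct_coef g k * c_coef g (p - k)) + ct_coef g p"
  proof -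
    have "p = Suc (p - 1)" using assms by simp
    then have "{1..p} = {1..Suc (p-1)}" by simp
    then show ?thesis using assms sum.cl_ivl_Suc[of "\<lambda>k. ct_coef g k * c_coef g (p - k)" 1 "p-1"]
      by simp
  qed
  moreover have "(\<Sum>k=1..p. ct_coef g k * c_coef g (p - k)) = - c_coef g p"
    using conv[of p g] assms sum_split0[of "\<lambda>k. ct_coef g k * c_coef g (p - k)" p] by simp
  ultimately show ?thesis by linarith
qed

lemma cp_ratio:
  assumes g: "0 < g" "g < 1" and p: "p \<ge> 2" and b: "b \<le> (1 - g) / real p"
  shows "j \<ge> 1 \<Longrightarrow> cp_coef g p j \<le> (1 - b) * cp_coef g p (j - 1)"
proof (induction j rule: less_induct)
  case (less j)
  show ?case
  proof (cases "j < p")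
    case True
    obtain i where i: "j = Suc i" using less.prems by (cases j) auto
    have "b \<le> (1 - g) / real j"
    proof -
      have "(1 - g) / real p \<le> (1 - g) / real j"
        using True g less.prems by (intro divide_left_mono) auto
      then show ?thesis using b by linarith
    qed
    then have "b * real j \<le> 1 - g" using less.prems by (simp add: field_simps)
    then have "(g + real i) / real (Suc i) \<le> 1 - b" using i by (simp add: field_simps)
    then have "c_coef g i * ((g + real i) / real (Suc i)) \<le> c_coef g i * (1 - b)"
      using c_pos[OF g(1), of i] by (intro mult_left_mono) auto
    then show ?thesis using True i by (simp add: cp_eq c_Suc mult.commute)
  next
    case False
    have m1: "min (p - 1) j = p - 1" using False by simp
    have m2: "min (p - 1) (j - 1) = p - 1" using False by simp
    have "cp_coef g p j = - (\<Sum>k\<in>{1..min (p - 1) j}. ct_coef g k * cp_coef g p (j - k))"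
      using less.prems by (subst cp_coef.simps) simp
    also have "\<dots> = (\<Sum>k=1..p-1. (- ct_coef g k) * cp_coef g p (j - k))"
      unfolding m1 by (simp add: sum_negf)
    also have "\<dots> \<le> (\<Sum>k=1..p-1. (- ct_coef g k) * ((1 - b) * cp_coef g p (j - 1 - k)))"
    proof (rule sum_mono)
      fix k assume k: "k \<in> {1..p-1}"
      have "cp_coef g p (j - k) \<le> (1 - b) * cp_coef g p (j - k - 1)"
        using less.IH[of "j - k"] k False by auto
      moreover have "- ct_coef g k \<ge> 0" using ct_nonpos[OF g, of k] k by simp
      ultimately show "(- ct_coef g k) * cp_coef g p (j - k) \<le> (- ct_coef g k) * ((1 - b) * cp_coef g p (j - 1 - k))"
        by (simp add: mult_left_mono_neg)
    qed
    also have "\<dots> = (1 - b) * (- (\<Sum>k\<in>{1..min (p - 1) (j - 1)}. ct_coef g k * cp_coef g p (j - 1 - k)))"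
      unfolding m2 by (simp add: sum_negf sum_distrib_left mult_ac)
    also have "\<dots> = (1 - b) * cp_coef g p (j - 1)"
      using False p by (subst (2) cp_coef.simps) simp
    finally show ?thesis .
  qed
qed

lemma beta_bounds:
  assumes g: "0 < g" "g < 1" and p: "p \<ge> 2"
  shows "(1 - g) / (8 * real p) \<le> beta_gp g p \<and> beta_gp g p \<le> (1 - g) / (4 * real p)"
proof -
  have p2: "real p \<ge> 2" using p by simp
  define L where "L = ln (2 * real p / (real p + 1))"
  have "ln ((real p + 1) / (2 * real p)) \<le> (real p + 1) / (2 * real p) - 1"
    using p2 by (intro ln_le_minus_one) simp
  moreover have "L = - ln ((real p + 1) / (2 * real p))"
    unfolding L_def using p2 by (simp add: ln_div)
  moreover have "(real p + 1) / (2 * real p) - 1 \<le> - 1/4"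
    using p2 by (simp add: field_simps)
  ultimately have L: "L \<ge> 1/4" by linarith
  have T1: "(1 - g) / (8 * real p) \<le> (1 - g) / (2 * real p) * L"
  proof -
    have "(1 - g) / (8 * real p) = (1 - g) / (2 * real p) * (1/4)" by simp
    also have "\<dots> \<le> (1 - g) / (2 * real p) * L"
      using L g p2 by (intro mult_left_mono) auto
    finally show ?thesis .
  qed
  define D where "D = real p powr g * (real p - 1) powr (1 - g)"
  have "D \<le> real p powr g * real p powr (1 - g)"
    unfolding D_def using g p2 by (intro mult_left_mono powr_mono2) auto
  also have "\<dots> = real p" using p2 by (simp add: powr_add[symmetric])
  finally have D1: "D \<le> real p" .
  have "(real p - 1) powr g * (real p - 1) powr (1 - g) \<le> D"
    unfolding D_def using g p2 by (intro mult_right_mono powr_mono2) auto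
  moreover have "(real p - 1) powr g * (real p - 1) powr (1 - g) = real p - 1"
    using p2 by (simp add: powr_add[symmetric])
  ultimately have D2: "real p - 1 \<le> D" by simp
  have Dpos: "D > 0" using D2 p2 by simp
  have T2a: "(1 - g) / (8 * real p) \<le> (1 - g) / (8 * D)"
    using D1 Dpos g by (intro divide_left_mono) auto
  have T2b: "(1 - g) / (8 * D) \<le> (1 - g) / (4 * real p)"
    using D2 Dpos g p2 by (intro divide_left_mono) auto
  have bdef: "beta_gp g p = min ((1 - g) / (2 * real p) * L) ((1 - g) / (8 * D))"
    unfolding beta_gp_def L_def D_def by (simp add: mult.assoc)
  show ?thesis unfolding bdef using T1 T2a T2b by simp
qed

theorem mainTheorem6:
  fixes \<gamma> :: real and p :: nat
  assumes "0 < \<gamma>" "\<gamma> < 1" "p \<ge> 2"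
  shows "(\<forall>j\<ge>p. cp_coef \<gamma> p j \<le> c_coef \<gamma> p * (1 - beta_gp \<gamma> p) ^ (j - p))
         \<and> (1 - \<gamma>) / (8 * real p) \<le> beta_gp \<gamma> p
         \<and> beta_gp \<gamma> p \<le> (1 - \<gamma>) / (4 * real p)"
proof -
  note bb = beta_bounds[OF assms]
  define b where "b = beta_gp \<gamma> p"
  have p2: "real p \<ge> 2" using assms by simp
  have "(1 - \<gamma>) / (4 * real p) \<le> (1 - \<gamma>) / real p"
    using assms by (intro divide_left_mono) auto
  then have b1: "b \<le> (1 - \<gamma>) / real p" using bb unfolding b_def by linarith
  have "(1 - \<gamma>) / real p \<le> 1" using assms p2 by (simp add: field_simps)
  then have b0: "0 \<le> 1 - b" using b1 by linarith
  note rat = cp_ratio[OF assms(1,2,3) b1]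
  have I: "cp_coef \<gamma> p (p + i) \<le> cp_coef \<gamma> p p * (1 - b) ^ i" for i
  proof (induction i)
    case 0 then show ?case by simp
  next
    case (Suc i)
    have "cp_coef \<gamma> p (p + Suc i) \<le> (1 - b) * cp_coef \<gamma> p (p + i)"
      using rat[of "p + Suc i"] by simp
    also have "\<dots> \<le> (1 - b) * (cp_coef \<gamma> p p * (1 - b) ^ i)"
      using Suc b0 by (intro mult_left_mono) auto
    finally show ?case by (simp add: mult_ac)
  qed
  have P: "cp_coef \<gamma> p p \<le> c_coef \<gamma> p"
    using cp_p[OF assms(3), of \<gamma>] ct_nonpos[OF assms(1,2), of p] assms by simp
  have "cp_coef \<gamma> p j \<le> c_coef \<gamma> p * (1 - b) ^ (j - p)" if "j \<ge> p" for j
  proof -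
    obtain i where i: "j = p + i" using \<open>j \<ge> p\<close> le_Suc_ex by blast
    have "cp_coef \<gamma> p j \<le> cp_coef \<gamma> p p * (1 - b) ^ i" using i I by simp
    also have "\<dots> \<le> c_coef \<gamma> p * (1 - b) ^ i"
      using P b0 by (intro mult_right_mono) auto
    finally show ?thesis using i by simp
  qed
  then show ?thesis using bb unfolding b_def by blast
qed

end
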